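(* Any nested logit that satisfies Regularity and Richness is a random utility nested logit, i.e., it admits a nested logit representation in which $\eta_i\le 1$ for every $i\le K$.
   Context: Here the set of alternatives $X$ may be infinite, and $\mathscr{A}$ is the collection of nonempty finite subsets of $X$. A stochastic choice function is $p:X\times\mathscr{A}\to[0,1]$ with $\sum_{a\in A}p(a,A)=1$, $p(x,A)=0$ for $x\notin A$, $p(a,A)>0$ for $a\in A$; $A\cup y=A\cup\{y\}$. $a\sim_p b$ means $\frac{p(a,A)}{p(b,A)}=\frac{p(a,\{a,b\})}{p(b,\{a,b\})}$ for all $A\in\mathscr{A}$ containing $a,b$. Nested logit: there exist a finite partition $X_1,\dots,X_K$ of $X$, $u:X\to\mathbb{R}_{++}$ and $\eta_1,\dots,\eta_K>0$ such that for every $A\in\mathscr{A}$ and $a\in A\cap X_i$, $p(a,A)=\frac{\big(\sum_{x\in A\cap X_i}u(x)\big)^{\eta_i}}{\sum_{j:A\cap X_j\ne\emptyset}\big(\sum_{y\in A\cap X_j}u(y)\big)^{\eta_j}}\cdot\frac{u(a)}{\sum_{b\in A\cap X_i}u(b)}$. Regularity: $p(x,A\cup y)\le p(x,A)$ for all $A\in\mathscr{A}$, $x\in A$, $y\in X$. Richness: for any $a\in X$ and $\rho\in(0,1)$ there is $b\in X$ with $a\sim_p b$ and $p(a,\{a,b\})=\rho$. *)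

theory Defs
  imports Complex_Main "HOL-Library.Disjoint_Sets"
begin

text \<open>The set of alternatives X is the (possibly infinite) universe of the type 'a.
  Menus are the nonempty finite subsets of X.\<close>

definition menu :: "'a set \<Rightarrow> bool" where
  "menu A \<longleftrightarrow> finite A \<and> A \<noteq> {}"

definition stoch_choice :: "('a \<Rightarrow> 'a set \<Rightarrow> real) \<Rightarrow> bool" where
  "stoch_choice p \<longleftrightarrow>
     (\<forall>A. menu A \<longrightarrow>
        (\<forall>x. 0 \<le> p x A \<and> p x A \<le> 1) \<and>
        (\<Sum>a\<in>A. p a A) = 1 \<and>
        (\<forall>x. x \<notin> A \<longrightarrow> p x A = 0) \<and>
        (\<forall>a\<in>A. p a A > 0))"

definition sim_p :: "('a \<Rightarrow> 'a set \<Rightarrow> real) \<Rightarrow> 'a \<Rightarrow> 'a \<Rightarrow> bool" where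
  "sim_p p a b \<longleftrightarrow>
     (\<forall>A. menu A \<and> a \<in> A \<and> b \<in> A \<longrightarrow>
        p a A / p b A = p a {a, b} / p b {a, b})"

definition nl_rep ::
  "('a \<Rightarrow> 'a set \<Rightarrow> real) \<Rightarrow> 'a set set \<Rightarrow> ('a \<Rightarrow> real) \<Rightarrow> ('a set \<Rightarrow> real) \<Rightarrow> bool" where
  "nl_rep p P u \<eta> \<longleftrightarrow>
     finite P \<and> partition_on UNIV P \<and>
     (\<forall>x. u x > 0) \<and> (\<forall>D\<in>P. \<eta> D > 0) \<and>
     (\<forall>A C a. menu A \<and> C \<in> P \<and> a \<in> A \<inter> C \<longrightarrow>
        p a A = ((\<Sum>x\<in>A \<inter> C. u x) powr \<eta> C /
                 (\<Sum>D\<in>{D\<in>P. A \<inter> D \<noteq> {}}. (\<Sum>y\<in>A \<inter> D. u y) powr \<eta> D))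
                * (u a / (\<Sum>b\<in>A \<inter> C. u b)))"

definition nested_logit :: "('a \<Rightarrow> 'a set \<Rightarrow> real) \<Rightarrow> bool" where
  "nested_logit p \<longleftrightarrow> (\<exists>P u \<eta>. nl_rep p P u \<eta>)"

definition regularity :: "('a \<Rightarrow> 'a set \<Rightarrow> real) \<Rightarrow> bool" where
  "regularity p \<longleftrightarrow> (\<forall>A x y. menu A \<and> x \<in> A \<longrightarrow> p x (insert y A) \<le> p x A)"

definition richness :: "('a \<Rightarrow> 'a set \<Rightarrow> real) \<Rightarrow> bool" where
  "richness p \<longleftrightarrow> (\<forall>a \<rho>. 0 < \<rho> \<and> \<rho> < 1 \<longrightarrow> (\<exists>b. sim_p p a b \<and> p a {a, b} = \<rho>))"

end

theory Submission
  imports Defs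
begin

lemma block_unique: "partition_on UNIV P \<Longrightarrow> D\<in>P \<Longrightarrow> D'\<in>P \<Longrightarrow> x\<in>D \<Longrightarrow> x\<in>D' \<Longrightarrow> D = D'"
  using disjointD partition_on_def by fastforce

lemma block_ex: "partition_on UNIV P \<Longrightarrow> \<exists>D\<in>P. x\<in>D"
  by (metis UnionE iso_tuple_UNIV_I partition_onD1)

lemma pw: "0 < (x::real) \<Longrightarrow> x powr e = x * x powr (e - 1)"
  by (simp add: powr_diff)

lemma p_pair_diff:
  assumes nl: "nl_rep p P u \<eta>" and C: "C\<in>P" "E\<in>P" "C\<noteq>E" "a\<in>C" "b\<in>E"
  shows "p a {a,b} = u a powr \<eta> C / (u a powr \<eta> C + u b powr \<eta> E)"
proof -
  have part: "partition_on UNIV P" and up: "\<And>x. u x > 0" using nl unfolding nl_rep_def by auto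
  have bnC: "b \<notin> C" using block_unique[OF part] C by blast
  have anE: "a \<notin> E" using block_unique[OF part] C by blast
  have m: "menu {a,b}" unfolding menu_def by auto
  have f: "p a {a,b} = ((\<Sum>x\<in>{a,b} \<inter> C. u x) powr \<eta> C /
                 (\<Sum>D\<in>{D\<in>P. {a,b} \<inter> D \<noteq> {}}. (\<Sum>y\<in>{a,b} \<inter> D. u y) powr \<eta> D))
                * (u a / (\<Sum>b\<in>{a,b} \<inter> C. u b))"
    using nl m C unfolding nl_rep_def by auto
  have i1: "{a,b} \<inter> C = {a}" using bnC C by auto
  have i2: "{a,b} \<inter> E = {b}" using anE C by auto
  have S: "{D\<in>P. {a,b} \<inter> D \<noteq> {}} = {C,E}"
    using block_unique[OF part] C by blast
  have f': "p a {a,b} = (u a powr \<eta> C / (\<Sum>D\<in>{C,E}. (\<Sum>y\<in>{a,b} \<inter> D. u y) powr \<eta> D)) * (u a / u a)"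
    using f unfolding i1 S by simp
  show ?thesis using f' i1 i2 C up[of a] by (simp add: sum.insert)
qed

lemma p_pair_same:
  assumes nl: "nl_rep p P u \<eta>" and C: "C\<in>P" "a\<in>C" "b\<in>C" "a\<noteq>b"
  shows "p a {a,b} = u a / (u a + u b)"
proof -
  have part: "partition_on UNIV P" and up: "\<And>x. u x > 0" using nl unfolding nl_rep_def by auto
  have m: "menu {a,b}" unfolding menu_def by auto
  have f: "p a {a,b} = ((\<Sum>x\<in>{a,b} \<inter> C. u x) powr \<eta> C /
                 (\<Sum>D\<in>{D\<in>P. {a,b} \<inter> D \<noteq> {}}. (\<Sum>y\<in>{a,b} \<inter> D. u y) powr \<eta> D))
                * (u a / (\<Sum>b\<in>{a,b} \<inter> C. u b))"
    using nl m C unfolding nl_rep_def by auto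
  have i1: "{a,b} \<inter> C = {a,b}" using C by auto
  have S: "{D\<in>P. {a,b} \<inter> D \<noteq> {}} = {C}"
    using block_unique[OF part] C by blast
  have "(u a + u b) powr \<eta> C > 0" using up[of a] up[of b] by simp
  then show ?thesis using f i1 S C by simp
qed

lemma p_triple:
  assumes nl: "nl_rep p P u \<eta>" and C: "C\<in>P" "E\<in>P" "C\<noteq>E" "a\<in>C" "b\<in>C" "a\<noteq>b" "c\<in>E"
  shows "p a {a,b,c} = (u a + u b) powr \<eta> C / ((u a + u b) powr \<eta> C + u c powr \<eta> E) * (u a / (u a + u b))"
    and "p c {a,b,c} = u c powr \<eta> E / ((u a + u b) powr \<eta> C + u c powr \<eta> E)"
proof -
  have part: "partition_on UNIV P" and up: "\<And>x. u x > 0" using nl unfolding nl_rep_def by auto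
  have cnC: "c \<notin> C" using block_unique[OF part] C by blast
  have anE: "a \<notin> E" "b \<notin> E" using block_unique[OF part] C by blast+
  have m: "menu {a,b,c}" unfolding menu_def by auto
  have S: "{D\<in>P. {a,b,c} \<inter> D \<noteq> {}} = {C,E}"
    using block_unique[OF part] C by blast
  have i1: "{a,b,c} \<inter> C = {a,b}" using cnC C by auto
  have i2: "{a,b,c} \<inter> E = {c}" using anE C by auto
  have den: "(\<Sum>D\<in>{D\<in>P. {a,b,c} \<inter> D \<noteq> {}}. (\<Sum>y\<in>{a,b,c} \<inter> D. u y) powr \<eta> D)
     = (u a + u b) powr \<eta> C + u c powr \<eta> E"
    using S i1 i2 C by (simp add: sum.insert)
  have f1: "p a {a,b,c} = ((\<Sum>x\<in>{a,b,c} \<inter> C. u x) powr \<eta> C /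
                 (\<Sum>D\<in>{D\<in>P. {a,b,c} \<inter> D \<noteq> {}}. (\<Sum>y\<in>{a,b,c} \<inter> D. u y) powr \<eta> D))
                * (u a / (\<Sum>b\<in>{a,b,c} \<inter> C. u b))"
    using nl m C unfolding nl_rep_def by auto
  then show "p a {a,b,c} = (u a + u b) powr \<eta> C / ((u a + u b) powr \<eta> C + u c powr \<eta> E) * (u a / (u a + u b))"
    using den i1 C by simp
  have f2: "p c {a,b,c} = ((\<Sum>x\<in>{a,b,c} \<inter> E. u x) powr \<eta> E /
                 (\<Sum>D\<in>{D\<in>P. {a,b,c} \<inter> D \<noteq> {}}. (\<Sum>y\<in>{a,b,c} \<inter> D. u y) powr \<eta> D))
                * (u c / (\<Sum>b\<in>{a,b,c} \<inter> E. u b))"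
    using nl m C unfolding nl_rep_def by auto
  then show "p c {a,b,c} = u c powr \<eta> E / ((u a + u b) powr \<eta> C + u c powr \<eta> E)"
    using den i2 up[of c] by simp
qed


lemma sim_not_in_C:
  assumes nl: "nl_rep p P u \<eta>" and C: "C\<in>P" "D0\<in>P" "D0\<noteq>C" "z0\<in>D0" "z'\<in>C" "m\<in>C" "m\<noteq>z'"
    and eta: "\<eta> C > 1" and sim: "sim_p p z0 z'"
  shows False
proof -
  have part: "partition_on UNIV P" and up: "\<And>x. u x > 0" using nl unfolding nl_rep_def by auto
  define A where "A = {z',m,z0}"
  have mA: "menu A" unfolding A_def menu_def by auto
  have zz: "z0 \<noteq> z'" using block_unique[OF part] C by blast
  have e: "p z0 A / p z' A = p z0 {z0, z'} / p z' {z0, z'}"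
    using sim mA zz unfolding sim_p_def A_def by auto
  define v where "v = u z'"
  define \<mu> where "\<mu> = u m"
  define W where "W = u z0 powr \<eta> D0"
  define T where "T = (v + \<mu>) powr \<eta> C"
  define V where "V = v powr \<eta> C"
  have vp: "v > 0" "\<mu> > 0" using up unfolding v_def \<mu>_def by auto
  have Wp: "W > 0" unfolding W_def using up[of z0] by simp
  have Tp: "T > 0" "V > 0" unfolding T_def V_def using vp by auto
  have a1: "p z' A = T / (T + W) * (v / (v + \<mu>))"
    using p_triple(1)[OF nl C(1) C(2) C(3)[symmetric] C(5) C(6) C(7)[symmetric] C(4)]
    unfolding A_def T_def W_def v_def \<mu>_def by simp
  have a2: "p z0 A = W / (T + W)"
    using p_triple(2)[OF nl C(1) C(2) C(3)[symmetric] C(5) C(6) C(7)[symmetric] C(4)]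
    unfolding A_def T_def W_def v_def \<mu>_def by simp
  have a3: "p z0 {z0,z'} = W / (W + V)"
    using p_pair_diff[OF nl C(2) C(1) C(3) C(4) C(5)] unfolding W_def V_def v_def by simp
  have a4: "p z' {z0,z'} = V / (V + W)"
    using p_pair_diff[OF nl C(1) C(2) C(3)[symmetric] C(5) C(4)] unfolding W_def V_def v_def
    by (simp add: insert_commute)
  have l: "p z0 A / p z' A = W * (v + \<mu>) / (T * v)"
    unfolding a1 a2 using Tp Wp vp by (simp add: divide_simps)
  have r: "p z0 {z0, z'} / p z' {z0, z'} = W / V"
    unfolding a3 a4 using Tp Wp vp by (simp add: divide_simps)
  have "W * (v + \<mu>) / (T * v) = W / V"
    using e l r by simp
  then have "(v + \<mu>) * V = T * v" using Tp Wp vp by (simp add: divide_simps)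
  then have "V * (v + \<mu>) = T * v" by (simp only: mult.commute)
  moreover have "V = v * v powr (\<eta> C - 1)"
    unfolding V_def by (rule pw) (use vp in simp)
  moreover have "T = (v + \<mu>) * (v + \<mu>) powr (\<eta> C - 1)"
    unfolding T_def by (rule pw) (use vp in simp)
  ultimately have "(v * (v + \<mu>)) * v powr (\<eta> C - 1) = (v * (v + \<mu>)) * (v + \<mu>) powr (\<eta> C - 1)"
    by (simp only: ac_simps)
  then have "v powr (\<eta> C - 1) = (v + \<mu>) powr (\<eta> C - 1)" using vp by simp
  moreover have "v powr (\<eta> C - 1) < (v + \<mu>) powr (\<eta> C - 1)"
    using vp eta by (intro powr_less_mono2) auto
  ultimately show False by simp
qed


lemma big_outside:
  assumes nl: "nl_rep p P u \<eta>" and sc: "stoch_choice p" and rich: "richness p"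
    and C: "C\<in>P" "D0\<in>P" "D0\<noteq>C" "z0\<in>D0" "x\<in>C" "y\<in>C" "x\<noteq>y"
    and eta: "\<eta> C > 1"
  shows "\<exists>z E. E\<in>P \<and> E\<noteq>C \<and> z\<in>E \<and> u z powr \<eta> E > K"
proof -
  have part: "partition_on UNIV P" and up: "\<And>x. u x > 0" and ep: "\<And>D. D\<in>P \<Longrightarrow> \<eta> D > 0"
    using nl unfolding nl_rep_def by auto
  define K1 where "K1 = max K 1"
  define u0 where "u0 = u z0"
  define w0 where "w0 = u z0 powr \<eta> D0"
  have K1p: "K1 > 0" "K1 \<ge> K" unfolding K1_def by auto
  have u0p: "u0 > 0" and w0p: "w0 > 0" unfolding u0_def w0_def using up[of z0] by auto
  define R where "R = max (K1 powr (1 / \<eta> D0) / u0) (K1 / w0) + 1"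
  have R1: "R * u0 > K1 powr (1 / \<eta> D0)"
  proof -
    have "R > K1 powr (1 / \<eta> D0) / u0" unfolding R_def by linarith
    then show ?thesis using u0p by (simp add: divide_less_eq mult.commute)
  qed
  have R2: "R * w0 > K1"
  proof -
    have "R > K1 / w0" unfolding R_def by linarith
    then show ?thesis using w0p by (simp add: divide_less_eq mult.commute)
  qed
  have Rp: "R > 0" unfolding R_def using K1p u0p w0p by (smt (verit) divide_pos_pos powr_gt_zero)
  have "0 < 1/(1+R) \<and> 1/(1+R) < 1" using Rp by (simp add: field_simps)
  then obtain z' where sim: "sim_p p z0 z'" and pz: "p z0 {z0,z'} = 1/(1+R)"
    using rich unfolding richness_def by blast
  have "z' \<noteq> z0"
  proof
    assume "z' = z0"
    then have "p z0 {z0,z'} = 1" using sc unfolding stoch_choice_def menu_def by auto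
    then show False using pz Rp by (simp add: field_simps)
  qed
  obtain E where E: "E\<in>P" "z'\<in>E" using block_ex[OF part] by blast
  have EC: "E \<noteq> C"
  proof
    assume "E = C"
    show False
    proof (cases "x = z'")
      case True
      show False using sim_not_in_C[OF nl C(1) C(2) C(3) C(4), of z' y] E \<open>E = C\<close> True C eta sim by auto
    next
      case False
      show False using sim_not_in_C[OF nl C(1) C(2) C(3) C(4), of z' x] E \<open>E = C\<close> False C eta sim by auto
    qed
  qed
  show ?thesis
  proof (cases "E = D0")
    case True
    have "p z0 {z0,z'} = u0 / (u0 + u z')"
      using p_pair_same[OF nl C(2) C(4)] E True \<open>z' \<noteq> z0\<close> unfolding u0_def by auto
    then have "u0 / (u0 + u z') = 1 / (1 + R)" using pz by simp
    then have "u0 * (1 + R) = u0 + u z'" using u0p up[of z'] Rp by (simp add: divide_simps)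
    then have uz: "u z' = R * u0" by (simp add: algebra_simps)
    have "K1 = (K1 powr (1 / \<eta> D0)) powr \<eta> D0" using K1p ep[OF C(2)] by (simp add: powr_powr)
    also have "\<dots> < u z' powr \<eta> D0" unfolding uz using R1 ep[OF C(2)] K1p
      by (intro powr_less_mono2) auto
    finally show ?thesis using E True EC K1p by (intro exI[of _ z'] exI[of _ E]) auto
  next
    case False
    have "p z0 {z0,z'} = w0 / (w0 + u z' powr \<eta> E)"
      using p_pair_diff[OF nl C(2) E(1) _ C(4) E(2)] False unfolding w0_def by auto
    then have "w0 / (w0 + u z' powr \<eta> E) = 1 / (1 + R)" using pz by simp
    then have "w0 * (1 + R) = w0 + u z' powr \<eta> E" using w0p up[of z'] Rp
      by (simp add: divide_simps) (smt (verit) powr_gt_zero)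
    then have "u z' powr \<eta> E = R * w0" by (simp add: algebra_simps)
    then show ?thesis using E EC R2 K1p by (intro exI[of _ z'] exI[of _ E]) auto
  qed
qed


lemma regcalc: "(s::real) > 0 \<Longrightarrow> \<alpha> > 0 \<Longrightarrow> a > 0 \<Longrightarrow> b > 0 \<Longrightarrow> w > 0 \<Longrightarrow> (s * b) / (s * b + w) * (\<alpha> / s) \<le> (\<alpha> * a) / (\<alpha> * a + w) \<Longrightarrow> b * (\<alpha> * a + w) \<le> a * (s * b + w)"
proof -
  assume h: "(s::real) > 0" "\<alpha> > 0" "a > 0" "b > 0" "w > 0" "(s * b) / (s * b + w) * (\<alpha> / s) \<le> (\<alpha> * a) / (\<alpha> * a + w)"
  have d: "s*b+w > 0" "\<alpha>*a+w > 0" using h by (auto intro: add_pos_pos mult_pos_pos)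
  have e1: "(s * b) / (s * b + w) * (\<alpha> / s) = \<alpha> * (b / (s * b + w))" using h by simp
  have e2: "(\<alpha> * a) / (\<alpha> * a + w) = \<alpha> * (a / (\<alpha> * a + w))" by simp
  have "\<alpha> * (b / (s * b + w)) \<le> \<alpha> * (a / (\<alpha> * a + w))" using h(6) unfolding e1 e2 .
  then have "b / (s * b + w) \<le> a / (\<alpha> * a + w)" using h(2) by (rule mult_left_le_imp_le)
  then show ?thesis using d by (simp add: divide_simps mult.commute)
qed

lemma no_big:
  assumes nl: "nl_rep p P u \<eta>" and sc: "stoch_choice p" and rich: "richness p" and reg: "regularity p"
    and C: "C\<in>P" "D0\<in>P" "D0\<noteq>C" "x\<in>C" "y\<in>C" "x\<noteq>y"
    and eta: "\<eta> C > 1"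
  shows False
proof -
  have part: "partition_on UNIV P" and up: "\<And>x. u x > 0"
    using nl unfolding nl_rep_def by auto
  have "D0 \<noteq> {}" using part C(2) unfolding partition_on_def by auto
  then obtain z0 where z0: "z0 \<in> D0" by auto
  define \<alpha> where "\<alpha> = u x"
  define \<beta> where "\<beta> = u y"
  define s where "s = \<alpha> + \<beta>"
  define a where "a = \<alpha> powr (\<eta> C - 1)"
  define b where "b = s powr (\<eta> C - 1)"
  have pos: "\<alpha> > 0" "\<beta> > 0" "s > 0" unfolding \<alpha>_def \<beta>_def s_def using up by (auto intro: add_pos_pos)
  have ab: "a < b" unfolding a_def b_def using pos eta by (intro powr_less_mono2) (auto simp: s_def)
  have ap: "a > 0" unfolding a_def using pos by simp
  define K0 where "K0 = a * b * \<beta> / (b - a)"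
  obtain z E where zE: "E\<in>P" "E\<noteq>C" "z\<in>E" "u z powr \<eta> E > K0"
    using big_outside[OF nl sc rich C(1) C(2) C(3) z0 C(4) C(5) C(6) eta] by blast
  define w where "w = u z powr \<eta> E"
  have wp: "w > 0" unfolding w_def using up[of z] by simp
  have e1: "u x powr \<eta> C = \<alpha> * a" unfolding \<alpha>_def a_def by (rule pw) (use up in auto)
  have e2: "(u x + u y) powr \<eta> C = s * b" unfolding s_def b_def \<alpha>_def \<beta>_def by (rule pw) (use up in \<open>auto intro: add_pos_pos\<close>)
  have p1': "p x {x,z} = u x powr \<eta> C / (u x powr \<eta> C + w)"
    using p_pair_diff[OF nl C(1) zE(1) zE(2)[symmetric] C(4) zE(3)] unfolding w_def by simp
  have p1: "p x {x,z} = (\<alpha> * a) / (\<alpha> * a + w)" unfolding p1' e1 ..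
  have p2': "p x {x,y,z} = (u x + u y) powr \<eta> C / ((u x + u y) powr \<eta> C + w) * (u x / (u x + u y))"
    using p_triple(1)[OF nl C(1) zE(1) zE(2)[symmetric] C(4) C(5) C(6) zE(3)] unfolding w_def by simp
  have p2: "p x {x,y,z} = (s * b) / (s * b + w) * (\<alpha> / s)" unfolding p2' e2
    unfolding s_def \<alpha>_def \<beta>_def ..
  have ins: "insert y {x,z} = {x,y,z}" by auto
  have "menu {x,z}" unfolding menu_def by auto
  then have "p x (insert y {x,z}) \<le> p x {x,z}" using reg unfolding regularity_def by blast
  then have "p x {x,y,z} \<le> p x {x,z}" unfolding ins .
  then have "(s * b) / (s * b + w) * (\<alpha> / s) \<le> (\<alpha> * a) / (\<alpha> * a + w)" using p1 p2 by simp
  then have "b * (\<alpha> * a + w) \<le> a * (s * b + w)"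
    using regcalc[of s \<alpha> a b w] pos ap ab wp by linarith
  then have "w * (b - a) \<le> a * b * \<beta>" unfolding s_def by (simp add: algebra_simps)
  then have "w \<le> K0" unfolding K0_def using ab by (simp add: divide_simps mult.commute)
  then show False using zE(4) unfolding w_def by simp
qed


lemma reparam:
  assumes nl: "nl_rep p P u \<eta>" and sing: "\<And>C x y. C\<in>P \<Longrightarrow> \<eta> C > 1 \<Longrightarrow> x\<in>C \<Longrightarrow> y\<in>C \<Longrightarrow> x = y"
  shows "nl_rep p P (\<lambda>x. if {x}\<in>P \<and> \<eta> {x} > 1 then u x powr \<eta> {x} else u x) (\<lambda>D. min (\<eta> D) 1)"
proof -
  define u' where "u' = (\<lambda>x. if {x}\<in>P \<and> \<eta> {x} > 1 then u x powr \<eta> {x} else u x)"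
  define \<eta>' where "\<eta>' = (\<lambda>D. min (\<eta> D) (1::real))"
  have part: "partition_on UNIV P" and up: "\<And>x. u x > 0" and ep: "\<And>D. D\<in>P \<Longrightarrow> \<eta> D > 0"
    and fin: "finite P" using nl unfolding nl_rep_def by auto
  have form: "\<And>A C a. menu A \<Longrightarrow> C \<in> P \<Longrightarrow> a \<in> A \<inter> C \<Longrightarrow>
        p a A = ((\<Sum>x\<in>A \<inter> C. u x) powr \<eta> C /
                 (\<Sum>D\<in>{D\<in>P. A \<inter> D \<noteq> {}}. (\<Sum>y\<in>A \<inter> D. u y) powr \<eta> D))
                * (u a / (\<Sum>b\<in>A \<inter> C. u b))"
    using nl unfolding nl_rep_def by blast
  have u'p: "\<And>x. u' x > 0" unfolding u'_def using up by (auto simp: less_le)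
  have big: "\<And>D. D\<in>P \<Longrightarrow> \<eta> D > 1 \<Longrightarrow> \<exists>d. D = {d}"
  proof -
    fix D assume D: "D\<in>P" "\<eta> D > 1"
    have "D \<noteq> {}" using part D unfolding partition_on_def by auto
    then obtain d where "d\<in>D" by auto
    then have "D = {d}" using sing[OF D] by auto
    then show "\<exists>d. D = {d}" by auto
  qed
  have small: "\<And>D x. D\<in>P \<Longrightarrow> \<not> \<eta> D > 1 \<Longrightarrow> x\<in>D \<Longrightarrow> u' x = u x"
  proof -
    fix D x assume D: "D\<in>P" "\<not> \<eta> D > 1" "x\<in>D"
    have "\<not> ({x}\<in>P \<and> \<eta> {x} > 1)"
    proof
      assume h: "{x}\<in>P \<and> \<eta> {x} > 1"
      then have "{x} = D" using block_unique[OF part, of "{x}" D x] D by auto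
      then show False using h D by auto
    qed
    then show "u' x = u x" unfolding u'_def by auto
  qed
  have blk: "\<And>A D. D\<in>P \<Longrightarrow> A \<inter> D \<noteq> {} \<Longrightarrow>
      (\<Sum>y\<in>A \<inter> D. u' y) powr \<eta>' D = (\<Sum>y\<in>A \<inter> D. u y) powr \<eta> D
      \<and> (\<forall>a\<in>A \<inter> D. (\<Sum>y\<in>A \<inter> D. u' y) powr \<eta>' D * (u' a / (\<Sum>y\<in>A \<inter> D. u' y))
            = (\<Sum>y\<in>A \<inter> D. u y) powr \<eta> D * (u a / (\<Sum>y\<in>A \<inter> D. u y)))"
  proof -
    fix A D assume D: "D\<in>P" "A \<inter> D \<noteq> {}"
    show "?thesis A D"
    proof (cases "\<eta> D > 1")
      case True
      then obtain d where d: "D = {d}" using big D by blast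
      then have AD: "A \<inter> D = {d}" using D by auto
      have u'd: "u' d = u d powr \<eta> D" unfolding u'_def using D d True by auto
      have e1: "\<eta>' D = 1" unfolding \<eta>'_def using True by auto
      show ?thesis unfolding AD e1 using u'd u'p[of d] up[of d] d by simp
    next
      case False
      have e1: "\<eta>' D = \<eta> D" unfolding \<eta>'_def using False by auto
      have s: "(\<Sum>y\<in>A \<inter> D. u' y) = (\<Sum>y\<in>A \<inter> D. u y)"
        using small[OF D(1) False] by (intro sum.cong) auto
      show ?thesis unfolding e1 s using small[OF D(1) False] by auto
    qed
  qed
  have "\<forall>A C a. menu A \<and> C \<in> P \<and> a \<in> A \<inter> C \<longrightarrow>
        p a A = ((\<Sum>x\<in>A \<inter> C. u' x) powr \<eta>' C /
                 (\<Sum>D\<in>{D\<in>P. A \<inter> D \<noteq> {}}. (\<Sum>y\<in>A \<inter> D. u' y) powr \<eta>' D))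
                * (u' a / (\<Sum>b\<in>A \<inter> C. u' b))"
  proof (intro allI impI)
    fix A C a assume h: "menu A \<and> C \<in> P \<and> a \<in> A \<inter> C"
    have den: "(\<Sum>D\<in>{D\<in>P. A \<inter> D \<noteq> {}}. (\<Sum>y\<in>A \<inter> D. u' y) powr \<eta>' D)
       = (\<Sum>D\<in>{D\<in>P. A \<inter> D \<noteq> {}}. (\<Sum>y\<in>A \<inter> D. u y) powr \<eta> D)"
      using blk by (intro sum.cong) auto
    have ne: "A \<inter> C \<noteq> {}" using h by auto
    have num: "(\<Sum>y\<in>A \<inter> C. u' y) powr \<eta>' C * (u' a / (\<Sum>y\<in>A \<inter> C. u' y))
            = (\<Sum>y\<in>A \<inter> C. u y) powr \<eta> C * (u a / (\<Sum>y\<in>A \<inter> C. u y))"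
      using blk[OF _ ne] h by auto
    have "p a A = ((\<Sum>x\<in>A \<inter> C. u x) powr \<eta> C /
                 (\<Sum>D\<in>{D\<in>P. A \<inter> D \<noteq> {}}. (\<Sum>y\<in>A \<inter> D. u y) powr \<eta> D))
                * (u a / (\<Sum>b\<in>A \<inter> C. u b))" using form h by blast
    also have "\<dots> = ((\<Sum>y\<in>A \<inter> C. u y) powr \<eta> C * (u a / (\<Sum>y\<in>A \<inter> C. u y))) /
                 (\<Sum>D\<in>{D\<in>P. A \<inter> D \<noteq> {}}. (\<Sum>y\<in>A \<inter> D. u y) powr \<eta> D)" by simp
    also have "\<dots> = ((\<Sum>y\<in>A \<inter> C. u' y) powr \<eta>' C * (u' a / (\<Sum>y\<in>A \<inter> C. u' y))) /
                 (\<Sum>D\<in>{D\<in>P. A \<inter> D \<noteq> {}}. (\<Sum>y\<in>A \<inter> D. u' y) powr \<eta>' D)"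
      unfolding num den ..
    finally show "p a A = ((\<Sum>x\<in>A \<inter> C. u' x) powr \<eta>' C /
                 (\<Sum>D\<in>{D\<in>P. A \<inter> D \<noteq> {}}. (\<Sum>y\<in>A \<inter> D. u' y) powr \<eta>' D))
                * (u' a / (\<Sum>b\<in>A \<inter> C. u' b))" by simp
  qed
  moreover have "\<forall>D\<in>P. \<eta>' D > 0" unfolding \<eta>'_def using ep by auto
  ultimately have "nl_rep p P u' \<eta>'" unfolding nl_rep_def using fin part u'p by auto
  then show ?thesis unfolding u'_def \<eta>'_def .
qed


theorem proposition3:
  fixes p :: "'a \<Rightarrow> 'a set \<Rightarrow> real"
  assumes "stoch_choice p"
    and "nested_logit p"
    and "regularity p"
    and "richness p"
  shows "\<exists>P u \<eta>. nl_rep p P u \<eta> \<and> (\<forall>D\<in>P. \<eta> D \<le> 1)"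
proof -
  obtain P u \<eta> where nl: "nl_rep p P u \<eta>" using assms(2) unfolding nested_logit_def by blast
  have part: "partition_on UNIV P" and up: "\<And>x. u x > 0" and fin: "finite P"
    using nl unfolding nl_rep_def by auto
  have form: "\<And>A C a. menu A \<Longrightarrow> C \<in> P \<Longrightarrow> a \<in> A \<inter> C \<Longrightarrow>
        p a A = ((\<Sum>x\<in>A \<inter> C. u x) powr \<eta> C /
                 (\<Sum>D\<in>{D\<in>P. A \<inter> D \<noteq> {}}. (\<Sum>y\<in>A \<inter> D. u y) powr \<eta> D))
                * (u a / (\<Sum>b\<in>A \<inter> C. u b))"
    using nl unfolding nl_rep_def by blast
  show ?thesis
  proof (cases "\<exists>C0\<in>P. \<forall>D\<in>P. D = C0")
    case True
    then obtain C0 where C0a: "C0\<in>P" and C0b: "\<forall>D\<in>P. D = C0" by (elim bexE)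
    have PC: "P = {C0}" using C0a C0b by blast
    have U: "C0 = UNIV" using part unfolding PC partition_on_def by auto
    have "nl_rep p P u (\<lambda>_. 1)"
      unfolding nl_rep_def
    proof (intro conjI allI impI ballI)
      fix A C a assume h: "menu A \<and> C \<in> P \<and> a \<in> A \<inter> C"
      have CC: "C = C0" using h C0b by blast
      have S: "{D\<in>P. A \<inter> D \<noteq> {}} = {C0}" using h unfolding PC U by auto
      have pos: "(\<Sum>x\<in>A. u x) > 0" using h up unfolding menu_def by (intro sum_pos) auto
      have "p a A = ((\<Sum>x\<in>A \<inter> C. u x) powr \<eta> C /
                 (\<Sum>D\<in>{D\<in>P. A \<inter> D \<noteq> {}}. (\<Sum>y\<in>A \<inter> D. u y) powr \<eta> D))
                * (u a / (\<Sum>b\<in>A \<inter> C. u b))" using form h by blast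
      also have "\<dots> = u a / (\<Sum>x\<in>A. u x)" unfolding S CC U using pos by simp
      finally show "p a A = ((\<Sum>x\<in>A \<inter> C. u x) powr 1 /
                 (\<Sum>D\<in>{D\<in>P. A \<inter> D \<noteq> {}}. (\<Sum>y\<in>A \<inter> D. u y) powr 1))
                * (u a / (\<Sum>b\<in>A \<inter> C. u b))" unfolding S CC U using pos by simp
    qed (use fin part up in auto)
    then show ?thesis by (intro exI[of _ P] exI[of _ u] exI[of _ "\<lambda>_. 1"]) auto
  next
    case False
    have sing: "\<And>C x y. C\<in>P \<Longrightarrow> \<eta> C > 1 \<Longrightarrow> x\<in>C \<Longrightarrow> y\<in>C \<Longrightarrow> x = y"
    proof (rule ccontr)
      fix C x y assume h: "C\<in>P" "\<eta> C > 1" "x\<in>C" "y\<in>C" "x \<noteq> y"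
      obtain D0 where "D0\<in>P" "D0 \<noteq> C" using False h(1) by blast
      then show False using no_big[OF nl assms(1) assms(4) assms(3) h(1) _ _ h(3) h(4) h(5) h(2)] by blast
    qed
    have "\<forall>D\<in>P. min (\<eta> D) 1 \<le> (1::real)" by simp
    moreover have "nl_rep p P (\<lambda>x. if {x}\<in>P \<and> \<eta> {x} > 1 then u x powr \<eta> {x} else u x) (\<lambda>D. min (\<eta> D) 1)"
      by (rule reparam[OF nl]) (rule sing)
    ultimately show ?thesis by blast
  qed
qed

end
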